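(* Let $T>0$, $A\in C([0,T];\mathbb{R}^{n\times n})$, $B\in C([0,T];\mathbb{R}^{n\times m})$, $E\in C([0,T];\mathbb{R}^{n\times\ell})$, and compact convex nonempty $\mathbb{U}\subset\mathbb{R}^m$, $\mathbb{D}\subset\mathbb{R}^\ell$. Assume that for every $t\in[0,T]$ the set $\mathbb{W}(t)=B(t)\mathbb{U}\ominus(-E(t)\mathbb{D})$ is nonempty. Let $L_g\ge0$, $\gamma_k\in\mathbb{R}$, $n_k\in\mathbb{N}$, points $\bar x_{i,k}\in\mathbb{R}^n$ and controls $\omega_{i,k}\in\mathscr{W}[0,T]$ ($1\le i\le n_k$) be given, let $\xi^\star_{i,k}$ be the solution on $[0,T]$ of $\dot\xi(s)=A(s)\xi(s)+\omega_{i,k}(s)$, $\xi(T)=\bar x_{i,k}$, and $\Omega^\star_k(t)=\mathrm{conv}(\{\xi^\star_{i,k}(t)\}_{i=1}^{n_k})$. Then $\bar v_k(t,x)=L_g\inf_{\xi\in\Omega^\star_k(t)}\|\Phi_A(T,t)(x-\xi)\|+\gamma_k$ is continuous on $[0,T]\times\mathbb{R}^n$.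
   Context: $\Phi_A(s,\tau)$ is the state-transition matrix of $\dot y(s)=A(s)y(s)$. For $Y,Z\subseteq\mathbb{R}^n$: $Y\ominus Z=\{c:\{c\}\oplus Z\subseteq Y\}$ where $\{c\}\oplus Z=\{c+z:z\in Z\}$, and $PY=\{Py:y\in Y\}$. $\mathscr{W}[0,T]$ is the set of measurable $\omega:[0,T]\to\mathbb{R}^n$ with $\omega(s)\in\mathbb{W}(s)$ for all $s$. *)

theory Defs
  imports "HOL-Analysis.Analysis"
begin

text \<open>Minkowski (Pontryagin) difference: Y \<ominus> Z = {c. {c} \<oplus> Z \<subseteq> Y}.\<close>
definition mink_diff :: "'a::ab_group_add set \<Rightarrow> 'a set \<Rightarrow> 'a set" where
  "mink_diff Y Z = {c. (\<lambda>z. c + z) ` Z \<subseteq> Y}"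

text \<open>Image of a set under a matrix: P Y = {P y | y \<in> Y}.\<close>
definition mat_image :: "real^'m^'n \<Rightarrow> (real^'m) set \<Rightarrow> (real^'n) set" where
  "mat_image P Y = (\<lambda>y. P *v y) ` Y"

text \<open>State-transition matrix Phi_A(s,tau) of y' = A(s) y on [0,T]:
  the value at s of the (unique) matrix solution X on [0,T] with X' = A X and X(tau) = I.\<close>
definition state_trans :: "real \<Rightarrow> (real \<Rightarrow> real^'n^'n) \<Rightarrow> real \<Rightarrow> real \<Rightarrow> real^'n^'n" where
  "state_trans T A s \<tau> = (THE M. \<exists>X. X \<tau> = mat 1 \<and>
      (\<forall>r\<in>{0..T}. (X has_vector_derivative (A r ** X r)) (at r within {0..T})) \<and> X s = M)"

text \<open>Admissible disturbance set W[0,T]: measurable selections of W(s) on [0,T].\<close>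
definition admissible :: "real \<Rightarrow> (real \<Rightarrow> (real^'n) set) \<Rightarrow> (real \<Rightarrow> real^'n) set" where
  "admissible T W = {\<omega>. \<omega> \<in> borel_measurable (lebesgue_on {0..T}) \<and> (\<forall>s\<in>{0..T}. \<omega> s \<in> W s)}"

text \<open>Value at t of the (Caratheodory) solution on [0,T] of xi' = A xi + omega, xi(T) = xbar,
  written in integral form: xi continuous and xi(T) - xi(t) = integral over [t,T] of (A xi + omega).\<close>
definition term_sol :: "real \<Rightarrow> (real \<Rightarrow> real^'n^'n) \<Rightarrow> (real \<Rightarrow> real^'n) \<Rightarrow> real^'n \<Rightarrow> real \<Rightarrow> real^'n" where
  "term_sol T A \<omega> xbar t = (THE y. \<exists>\<xi>. continuous_on {0..T} \<xi> \<and>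
      (\<forall>r\<in>{0..T}. ((\<lambda>s. A s *v \<xi> s + \<omega> s) has_integral (xbar - \<xi> r)) {r..T}) \<and> \<xi> t = y)"

end

theory Submission
  imports Defs
begin

lemma compact_bound: "compact (f ` S) \<Longrightarrow> (\<exists>M>0. \<forall>x\<in>S. norm (f x) \<le> M)"
  using compact_imp_bounded[of "f ` S"] unfolding bounded_pos by auto

locale lode =
  fixes P :: "'b::real_normed_vector \<Rightarrow> 'a::euclidean_space \<Rightarrow> 'a"
    and A :: "real \<Rightarrow> 'b" and a b :: real
  assumes bb: "bounded_bilinear P" and Acont: "continuous_on {a..b} A" and ab: "a \<le> b"
begin

definition sol :: "(real \<Rightarrow> 'a) \<Rightarrow> 'a \<Rightarrow> (real \<Rightarrow> 'a) \<Rightarrow> bool" where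
  "sol g c y \<longleftrightarrow> continuous_on {a..b} y \<and>
     (\<forall>r\<in>{a..b}. ((\<lambda>s. P (A s) (y s) + g s) has_integral (c - y r)) {r..b})"

lemma Kbound: obtains K where "K > 0" "\<And>s v. s \<in> {a..b} \<Longrightarrow> norm (P (A s) v) \<le> K * norm v"
proof -
  obtain K0 where K0: "K0 > 0" "\<And>x y. norm (P x y) \<le> norm x * norm y * K0"
    using bounded_bilinear.pos_bounded[OF bb] by blast
  have "compact (A ` {a..b})" by (rule compact_continuous_image[OF Acont]) simp
  then obtain B where B: "B > 0" "\<And>s. s \<in> {a..b} \<Longrightarrow> norm (A s) \<le> B"
    using compact_imp_bounded bounded_pos by (metis imageI)
  show ?thesis
  proof (rule that[of "B * K0"])
    show "B * K0 > 0" using B K0 by simp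
    fix s v assume s: "s \<in> {a..b}"
    have "norm (P (A s) v) \<le> norm (A s) * norm v * K0" by (rule K0(2))
    also have "\<dots> \<le> B * norm v * K0"
      using B(2)[OF s] K0(1) by (intro mult_right_mono) auto
    finally show "norm (P (A s) v) \<le> B * K0 * norm v" by (simp add: algebra_simps)
  qed
qed

lemma cont_P: "continuous_on {a..b} y \<Longrightarrow> continuous_on {a..b} (\<lambda>s. P (A s) (y s))"
  by (rule bounded_bilinear.continuous_on[OF bb Acont])

lemma poly_int:
  fixes K M :: real and k :: nat
  assumes "r \<le> b"
  shows "((\<lambda>s. K * (M * (K * (b - s)) ^ k / fact k)) has_integral
          M * (K * (b - r)) ^ Suc k / fact (Suc k)) {r..b}"
proof -
  have "((\<lambda>s. K * (M * (K * (b - s)) ^ k / fact k)) has_integral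
      ((- M * (K * (b - b)) ^ Suc k / fact (Suc k)) - (- M * (K * (b - r)) ^ Suc k / fact (Suc k)))) {r..b}"
  proof (rule fundamental_theorem_of_calculus[OF assms])
    fix x assume "x \<in> {r..b}"
    have "((\<lambda>s. - M * (K * (b - s)) ^ Suc k / fact (Suc k)) has_real_derivative
        (- M * (real (Suc k) * (K * (b - x)) ^ k * (K * (0 - 1))) / fact (Suc k))) (at x within {r..b})"
      by (intro derivative_eq_intros) auto
    moreover have "(- M * (real (Suc k) * (K * (b - x)) ^ k * (K * (0 - 1))) / fact (Suc k))
       = K * (M * (K * (b - x)) ^ k / fact k)"
      by (simp add: field_simps del: of_nat_Suc)
    ultimately show "((\<lambda>s. - M * (K * (b - s)) ^ Suc k / fact (Suc k)) has_vector_derivative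
        K * (M * (K * (b - x)) ^ k / fact k)) (at x within {r..b})"
      by (metis has_real_derivative_iff_has_vector_derivative)
  qed
  then show ?thesis by simp
qed

lemma est:
  assumes K: "\<And>s v. s \<in> {a..b} \<Longrightarrow> norm (P (A s) v) \<le> K * norm v" "K > 0"
    and u: "continuous_on {a..b} u" and r: "r \<in> {a..b}"
    and bnd: "\<And>s. s \<in> {r..b} \<Longrightarrow> norm (u s) \<le> M * (K * (b - s)) ^ k / fact k"
  shows "norm (integral {r..b} (\<lambda>s. P (A s) (u s))) \<le> M * (K * (b - r)) ^ Suc k / fact (Suc k)"
proof -
  have sub: "{r..b} \<subseteq> {a..b}" using r by auto
  have i1: "(\<lambda>s. P (A s) (u s)) integrable_on {r..b}"
    by (rule integrable_continuous_interval, rule continuous_on_subset[OF cont_P[OF u] sub])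
  have pi: "((\<lambda>s. K * (M * (K * (b - s)) ^ k / fact k)) has_integral
          M * (K * (b - r)) ^ Suc k / fact (Suc k)) {r..b}"
    using r by (intro poly_int) auto
  have "norm (integral {r..b} (\<lambda>s. P (A s) (u s))) \<le> integral {r..b} (\<lambda>s. K * (M * (K * (b - s)) ^ k / fact k))"
  proof (rule integral_norm_bound_integral[OF i1])
    show "(\<lambda>s. K * (M * (K * (b - s)) ^ k / fact k)) integrable_on {r..b}" using pi by blast
    fix s assume s: "s \<in> {r..b}"
    have "norm (P (A s) (u s)) \<le> K * norm (u s)" using K(1) sub s by blast
    also have "\<dots> \<le> K * (M * (K * (b - s)) ^ k / fact k)"
      using bnd[OF s] K(2) by (intro mult_left_mono) auto
    finally show "norm (P (A s) (u s)) \<le> K * (M * (K * (b - s)) ^ k / fact k)" .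
  qed
  also have "\<dots> = M * (K * (b - r)) ^ Suc k / fact (Suc k)" using pi by (rule integral_unique)
  finally show ?thesis .
qed

primrec pic :: "(real \<Rightarrow> 'a) \<Rightarrow> 'a \<Rightarrow> nat \<Rightarrow> real \<Rightarrow> 'a" where
  "pic g c 0 = (\<lambda>r. c)"
| "pic g c (Suc k) = (\<lambda>r. c - integral {r..b} (\<lambda>s. P (A s) (pic g c k s) + g s))"

declare pic.simps[simp del]
lemma pic_cont:
  assumes g: "g integrable_on {a..b}"
  shows "continuous_on {a..b} (pic g c k)"
proof (induction k)
  case 0 then show ?case by (simp add: pic.simps)
next
  case (Suc k)
  have "(\<lambda>s. P (A s) (pic g c k s) + g s) integrable_on {a..b}"
    by (intro integrable_add g integrable_continuous_interval cont_P Suc)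
  then show ?case
    by (simp only: pic.simps(2),
        intro continuous_on_diff continuous_on_const indefinite_integral_continuous_1')
qed

lemma sol_exists:
  assumes g: "g integrable_on {a..b}"
  shows "\<exists>y. sol g c y"
proof -
  obtain K where K: "K > 0" "\<And>s v. s \<in> {a..b} \<Longrightarrow> norm (P (A s) v) \<le> K * norm v"
    using Kbound by blast
  define y where "y = pic g c"
  have y0: "y 0 r = c" for r by (simp add: y_def pic.simps)
  have yS: "y (Suc k) r = c - integral {r..b} (\<lambda>s. P (A s) (y k s) + g s)" for k r
    by (simp only: y_def pic.simps)
  have yc: "\<And>k. continuous_on {a..b} (y k)" unfolding y_def using pic_cont[OF g] .
  have "compact ((\<lambda>r. y 1 r - y 0 r) ` {a..b})"
    by (intro compact_continuous_image continuous_on_diff yc) simp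
  then obtain M where M: "M > 0" "\<And>r. r \<in> {a..b} \<Longrightarrow> norm (y 1 r - y 0 r) \<le> M"
    using compact_bound by blast
  have diff: "y (Suc (Suc k)) r - y (Suc k) r = - integral {r..b} (\<lambda>s. P (A s) (y (Suc k) s - y k s))"
    if r: "r \<in> {a..b}" for k r
  proof -
    have sub: "{r..b} \<subseteq> {a..b}" using r by auto
    have i: "(\<lambda>s. P (A s) (y j s) + g s) integrable_on {r..b}" for j
      by (intro integrable_add integrable_on_subinterval[OF g sub] integrable_continuous_interval
          continuous_on_subset[OF cont_P[OF yc] sub])
    have "y (Suc (Suc k)) r - y (Suc k) r = - (integral {r..b} (\<lambda>s. P (A s) (y (Suc k) s) + g s)
         - integral {r..b} (\<lambda>s. P (A s) (y k s) + g s))"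
      by (simp only: yS) simp
    also have "\<dots> = - integral {r..b} (\<lambda>s. (P (A s) (y (Suc k) s) + g s) - (P (A s) (y k s) + g s))"
      by (simp only: integral_diff[OF i i])
    also have "\<dots> = - integral {r..b} (\<lambda>s. P (A s) (y (Suc k) s - y k s))"
      by (simp add: bounded_bilinear.diff_right[OF bb])
    finally show ?thesis .
  qed
  have bnd: "\<forall>r\<in>{a..b}. norm (y (Suc k) r - y k r) \<le> M * (K * (b - r)) ^ k / fact k" for k
  proof (induction k)
    case 0 then show ?case using M by simp
  next
    case (Suc k)
    show ?case
    proof
      fix r assume r: "r \<in> {a..b}"
      have "norm (y (Suc (Suc k)) r - y (Suc k) r) = norm (integral {r..b} (\<lambda>s. P (A s) (y (Suc k) s - y k s)))"
        using diff[OF r] by simp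
      also have "\<dots> \<le> M * (K * (b - r)) ^ Suc k / fact (Suc k)"
        using Suc r by (intro est[OF K(2) K(1)] continuous_on_diff yc) auto
      finally show "norm (y (Suc (Suc k)) r - y (Suc k) r) \<le> M * (K * (b - r)) ^ Suc k / fact (Suc k)" .
    qed
  qed
  have bnd2: "norm (y (Suc k) r - y k r) \<le> M * (K * (b - a)) ^ k / fact k" if r: "r \<in> {a..b}" for k r
  proof -
    have "(K * (b - r)) ^ k \<le> (K * (b - a)) ^ k"
      using r K by (intro power_mono mult_left_mono) auto
    then have "M * (K * (b - r)) ^ k / fact k \<le> M * (K * (b - a)) ^ k / fact k"
      using M by (intro divide_right_mono mult_left_mono) auto
    then show ?thesis using bnd[of k] r by fastforce
  qed
  have summ: "summable (\<lambda>k. M * (K * (b - a)) ^ k / fact k)"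
    using summable_mult[OF summable_exp[of "K * (b - a)"], of M]
    by (simp add: field_simps)
  have ul: "uniform_limit {a..b} (\<lambda>n x. \<Sum>i<n. (y (Suc i) x - y i x)) (\<lambda>x. suminf (\<lambda>i. y (Suc i) x - y i x)) sequentially"
    by (rule Weierstrass_m_test[OF bnd2 summ])
  define Y where "Y x = c + suminf (\<lambda>i. y (Suc i) x - y i x)" for x
  have ul2: "uniform_limit {a..b} y Y sequentially"
  proof -
    have "uniform_limit {a..b} (\<lambda>n x. c + (\<Sum>i<n. (y (Suc i) x - y i x))) Y sequentially"
      unfolding Y_def by (intro uniform_limit_intros ul)
    moreover have "(\<lambda>n x. c + (\<Sum>i<n. (y (Suc i) x - y i x))) = y"
      proof (intro ext)
      fix n x show "c + (\<Sum>i<n. (y (Suc i) x - y i x)) = y n x"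
        using sum_lessThan_telescope[of "\<lambda>i. y i x" n] y0[of x] by simp
    qed
    ultimately show ?thesis by simp
  qed
  have Yc: "continuous_on {a..b} Y"
    by (rule uniform_limit_theorem[OF _ ul2]) (auto simp: yc)
  show ?thesis
  proof (intro exI[of _ Y], unfold sol_def, intro conjI Yc ballI)
    fix r assume r: "r \<in> {a..b}"
    have sub: "{r..b} \<subseteq> {a..b}" using r by auto
    have ul3: "uniform_limit {r..b} (\<lambda>n s. P (A s) (y n s)) (\<lambda>s. P (A s) (Y s)) sequentially"
    proof (rule uniform_limitI)
      fix e :: real assume e: "e > 0"
      have "\<forall>\<^sub>F n in sequentially. \<forall>x\<in>{a..b}. dist (y n x) (Y x) < e / K"
        using uniform_limitD[OF ul2] e K by simp
      then show "\<forall>\<^sub>F n in sequentially. \<forall>x\<in>{r..b}. dist (P (A x) (y n x)) (P (A x) (Y x)) < e"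
      proof (rule eventually_mono)
        fix n assume H: "\<forall>x\<in>{a..b}. dist (y n x) (Y x) < e / K"
        show "\<forall>x\<in>{r..b}. dist (P (A x) (y n x)) (P (A x) (Y x)) < e"
        proof
          fix x assume x: "x \<in> {r..b}"
          have "dist (P (A x) (y n x)) (P (A x) (Y x)) = norm (P (A x) (y n x - Y x))"
            by (simp add: dist_norm bounded_bilinear.diff_right[OF bb])
          also have "\<dots> \<le> K * norm (y n x - Y x)" using K(2) x sub by blast
          also have "\<dots> < K * (e / K)"
          proof -
            have "norm (y n x - Y x) < e / K" using H x sub by (force simp: dist_norm)
            then show ?thesis using K(1) by (simp add: pos_less_divide_eq mult.commute)
          qed
          finally show "dist (P (A x) (y n x)) (P (A x) (Y x)) < e" using K(1) by simp
        qed
      qed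
    qed
    obtain I J where IJ: "\<And>n. ((\<lambda>s. P (A s) (y n s)) has_integral I n) {r..b}"
      "((\<lambda>s. P (A s) (Y s)) has_integral J) {r..b}" "I \<longlonglongrightarrow> J"
      by (rule uniform_limit_integral[OF ul3]) (auto intro: continuous_on_subset[OF cont_P[OF yc] sub])
    obtain G where G: "(g has_integral G) {r..b}"
      using integrable_on_subinterval[OF g sub] by blast
    have eq: "y (Suc n) r = c - (I n + G)" for n
      using integral_unique[OF has_integral_add[OF IJ(1)[of n] G]] by (simp only: yS)
    have "(\<lambda>n. y (Suc n) r) \<longlonglongrightarrow> Y r"
      using tendsto_uniform_limitI[OF ul2 r] by (rule LIMSEQ_Suc)
    moreover have "(\<lambda>n. y (Suc n) r) \<longlonglongrightarrow> c - (J + G)"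
      unfolding eq by (intro tendsto_intros IJ(3))
    ultimately have "Y r = c - (J + G)" by (rule LIMSEQ_unique)
    then show "((\<lambda>s. P (A s) (Y s) + g s) has_integral (c - Y r)) {r..b}"
      using has_integral_add[OF IJ(2) G] by (simp add: add.commute)
  qed
qed

lemma sol_unique:
  assumes y1: "sol g c y1" and y2: "sol g c y2" and r: "r \<in> {a..b}"
  shows "y1 r = y2 r"
proof -
  obtain K where K: "K > 0" "\<And>s v. s \<in> {a..b} \<Longrightarrow> norm (P (A s) v) \<le> K * norm v"
    using Kbound by blast
  define z where "z s = y1 s - y2 s" for s
  have zc: "continuous_on {a..b} z"
    using y1 y2 unfolding sol_def z_def by (intro continuous_on_diff) auto
  have zeq: "z t = - integral {t..b} (\<lambda>s. P (A s) (z s))" if t: "t \<in> {a..b}" for t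
  proof -
    have h1: "((\<lambda>s. P (A s) (y1 s) + g s) has_integral (c - y1 t)) {t..b}"
      using y1 t unfolding sol_def by blast
    have h2: "((\<lambda>s. P (A s) (y2 s) + g s) has_integral (c - y2 t)) {t..b}"
      using y2 t unfolding sol_def by blast
    have "((\<lambda>s. (P (A s) (y1 s) + g s) - (P (A s) (y2 s) + g s)) has_integral
         ((c - y1 t) - (c - y2 t))) {t..b}"
      by (rule has_integral_diff[OF h1 h2])
    then have "((\<lambda>s. P (A s) (z s)) has_integral (- z t)) {t..b}"
      by (simp add: z_def bounded_bilinear.diff_right[OF bb])
    then show ?thesis by (simp add: integral_unique)
  qed
  obtain M where M: "M > 0" "\<And>t. t \<in> {a..b} \<Longrightarrow> norm (z t) \<le> M"
    using compact_bound[of z "{a..b}"] compact_continuous_image[OF zc] by auto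
  have bnd: "\<forall>t\<in>{a..b}. norm (z t) \<le> M * (K * (b - t)) ^ k / fact k" for k
  proof (induction k)
    case 0 then show ?case using M by simp
  next
    case (Suc k)
    show ?case
    proof
      fix t assume t: "t \<in> {a..b}"
      have "norm (z t) = norm (integral {t..b} (\<lambda>s. P (A s) (z s)))"
        using zeq[OF t] by simp
      also have "\<dots> \<le> M * (K * (b - t)) ^ Suc k / fact (Suc k)"
        using Suc t by (intro est[OF K(2) K(1) zc]) auto
      finally show "norm (z t) \<le> M * (K * (b - t)) ^ Suc k / fact (Suc k)" .
    qed
  qed
  have "summable (\<lambda>k. M * (K * (b - r)) ^ k / fact k)"
    using summable_mult[OF summable_exp[of "K * (b - r)"], of M]
    by (simp add: field_simps)
  then have "(\<lambda>k. M * (K * (b - r)) ^ k / fact k) \<longlonglongrightarrow> 0"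
    by (rule summable_LIMSEQ_zero)
  then have "norm (z r) \<le> 0"
    using bnd r by (intro LIMSEQ_le_const) auto
  then show ?thesis by (simp add: z_def)
qed

lemma sol_b: assumes "sol g c y" shows "y b = c"
proof -
  have "((\<lambda>s. P (A s) (y s) + g s) has_integral (c - y b)) {b..b}"
    using assms ab unfolding sol_def by (metis atLeastAtMost_iff order_refl)
  then have "((\<lambda>s. P (A s) (y s) + g s) has_integral (c - y b)) {b}" by simp
  then have "c - y b = 0" using has_integral_refl(2) has_integral_unique by blast
  then show ?thesis by simp
qed

lemma sol_deriv:
  assumes "sol (\<lambda>_. 0) c y" and r: "r \<in> {a..b}"
  shows "(y has_vector_derivative P (A r) (y r)) (at r within {a..b})"
proof -
  have yc: "continuous_on {a..b} y" using assms unfolding sol_def by blast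
  let ?h = "\<lambda>s. P (A s) (y s)"
  have hc: "continuous_on {a..b} ?h" by (rule cont_P[OF yc])
  have hi: "?h integrable_on {a..b}" by (rule integrable_continuous_interval[OF hc])
  have eq: "y t = (c - integral {a..b} ?h) + integral {a..t} ?h" if t: "t \<in> {a..b}" for t
  proof -
    have "(?h has_integral (c - y t)) {t..b}" using assms(1) t unfolding sol_def by auto
    then have "integral {t..b} ?h = c - y t" by (rule integral_unique)
    then have e1: "c = y t + integral {t..b} ?h" by (simp add: algebra_simps)
    have e2: "integral {a..b} ?h = integral {a..t} ?h + integral {t..b} ?h"
      using t by (intro Henstock_Kurzweil_Integration.integral_combine[symmetric] hi) auto
    show ?thesis by (subst e1, subst e2) (simp add: algebra_simps)
  qed
  have "((\<lambda>t. (c - integral {a..b} ?h) + integral {a..t} ?h) has_vector_derivative ?h r) (at r within {a..b})"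
    using has_vector_derivative_add[OF has_vector_derivative_const integral_has_vector_derivative[OF hc r]]
    by simp
  then show ?thesis
    by (rule has_vector_derivative_transform[OF r eq, rotated]) 
qed

end

lemma bb_mm: "bounded_bilinear (\<lambda>(a::real^'n^'n) (b::real^'k^'n). a ** b)"
  unfolding bilinear_conv_bounded_bilinear[symmetric] bilinear_def
  by (auto intro!: linearI simp: matrix_matrix_mult_def vec_eq_iff sum.distrib
      sum_distrib_left algebra_simps scaleR_sum_right)
lemma bb_mv: "bounded_bilinear (\<lambda>(a::real^'m^'n) (b::real^'m). a *v b)"
  unfolding bilinear_conv_bounded_bilinear[symmetric] bilinear_def
  by (auto intro!: linearI simp: matrix_vector_mult_def vec_eq_iff sum.distrib
      sum_distrib_left algebra_simps scaleR_sum_right)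
lemma bb_wm: "bounded_bilinear (\<lambda>(a::real^'n^'n) (b::real^'n^'n). - (b ** a))"
  unfolding bilinear_conv_bounded_bilinear[symmetric] bilinear_def
  by (auto intro!: linearI simp: matrix_matrix_mult_def vec_eq_iff sum.distrib
      sum_distrib_left algebra_simps scaleR_sum_right sum_negf)

lemma deriv_zero_const:
  fixes f :: "real \<Rightarrow> 'a::real_normed_vector"
  assumes "\<And>r. r \<in> {0..T} \<Longrightarrow> (f has_vector_derivative 0) (at r within {0..T})"
    and "t \<in> {0..T}" "s \<in> {0..T}"
  shows "f t = f s"
proof -
  have "\<exists>c. \<forall>x\<in>{0..T}. f x = c"
    by (rule has_derivative_zero_constant) (use assms(1) in \<open>auto simp: has_vector_derivative_def\<close>)
  then show ?thesis using assms(2,3) by metis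
qed

lemma state_trans_sol:
  fixes A :: "real \<Rightarrow> real^'n^'n"
  assumes T: "T \<ge> 0" and Ac: "continuous_on {0..T} A"
  obtains W where "continuous_on {0..T} W" "\<And>t. t \<in> {0..T} \<Longrightarrow> state_trans T A T t = W t"
proof -
  interpret LY: lode "\<lambda>(a::real^'n^'n) (b::real^'n^'n). a ** b" A 0 T
    by (intro lode.intro bb_mm Ac T)
  interpret LW: lode "\<lambda>(a::real^'n^'n) (b::real^'n^'n). - (b ** a)" A 0 T
    by (intro lode.intro bb_wm Ac T)
  obtain Y where Y: "LY.sol (\<lambda>_. 0) (mat 1) Y" using LY.sol_exists by fastforce
  obtain W where W: "LW.sol (\<lambda>_. 0) (mat 1) W" using LW.sol_exists by fastforce
  have Yd: "\<And>r. r \<in> {0..T} \<Longrightarrow> (Y has_vector_derivative A r ** Y r) (at r within {0..T})"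
    using LY.sol_deriv[OF Y] by simp
  have Wd: "\<And>r. r \<in> {0..T} \<Longrightarrow> (W has_vector_derivative - (W r ** A r)) (at r within {0..T})"
    using LW.sol_deriv[OF W] by simp
  have Wc: "continuous_on {0..T} W" using W unfolding LW.sol_def by blast
  have YT: "Y T = mat 1" using LY.sol_b[OF Y] .
  have WT: "W T = mat 1" using LW.sol_b[OF W] .
  have WX: "W r ** X r = W s ** X s"
    if X: "\<And>r. r \<in> {0..T} \<Longrightarrow> (X has_vector_derivative A r ** X r) (at r within {0..T})"
      and r: "r \<in> {0..T}" and s: "s \<in> {0..T}" for X r s
  proof (rule deriv_zero_const[OF _ r s])
    fix q assume q: "q \<in> {0..T}"
    have "((\<lambda>x. W x ** X x) has_vector_derivative (W q ** (A q ** X q) + (- (W q ** A q)) ** X q))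
        (at q within {0..T})"
      by (rule bounded_bilinear.has_vector_derivative[OF bb_mm Wd[OF q] X[OF q]])
    moreover have "W q ** (A q ** X q) + (- (W q ** A q)) ** X q = 0"
      by (simp add: bounded_bilinear.minus_left[OF bb_mm] matrix_mul_assoc)
    ultimately show "((\<lambda>x. W x ** X x) has_vector_derivative 0) (at q within {0..T})" by simp
  qed
  have WY: "W r ** Y r = mat 1" if r: "r \<in> {0..T}" for r
    using WX[OF Yd r, of T] T by (simp add: YT WT)
  have YW: "Y r ** W r = mat 1" if r: "r \<in> {0..T}" for r
    using WY[OF r] matrix_left_right_inverse by blast
  show ?thesis
  proof (rule that[OF Wc])
    fix t assume t: "t \<in> {0..T}"
    show "state_trans T A T t = W t"
      unfolding state_trans_def
    proof (rule the_equality)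
      show "\<exists>X. X t = mat 1 \<and> (\<forall>r\<in>{0..T}. (X has_vector_derivative A r ** X r) (at r within {0..T})) \<and> X T = W t"
      proof (intro exI[of _ "\<lambda>r. Y r ** W t"] conjI ballI)
        show "Y t ** W t = mat 1" by (rule YW[OF t])
        show "Y T ** W t = W t" by (simp add: YT)
        fix r assume r: "r \<in> {0..T}"
        have "((\<lambda>r. Y r ** W t) has_vector_derivative (Y r ** 0 + (A r ** Y r) ** W t)) (at r within {0..T})"
          by (rule bounded_bilinear.has_vector_derivative[OF bb_mm Yd[OF r] has_vector_derivative_const])
        then show "((\<lambda>r. Y r ** W t) has_vector_derivative A r ** (Y r ** W t)) (at r within {0..T})"
          by (simp add: matrix_mul_assoc)
      qed
    next
      fix M assume "\<exists>X. X t = mat 1 \<and> (\<forall>r\<in>{0..T}. (X has_vector_derivative A r ** X r) (at r within {0..T})) \<and> X T = M"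
      then obtain X where X: "X t = mat 1" "\<And>r. r \<in> {0..T} \<Longrightarrow> (X has_vector_derivative A r ** X r) (at r within {0..T})" "X T = M"
        by blast
      have "W T ** X T = W t ** X t" using WX[OF X(2) _ t, of T] T by simp
      then show "M = W t" using X WT by simp
    qed
  qed
qed

lemma term_sol_sol:
  fixes A :: "real \<Rightarrow> real^'n^'n"
  assumes T: "T \<ge> 0" and Ac: "continuous_on {0..T} A" and wi: "w integrable_on {0..T}"
  obtains \<xi> where "continuous_on {0..T} \<xi>" "\<And>t. t \<in> {0..T} \<Longrightarrow> term_sol T A w xbar t = \<xi> t"
proof -
  interpret LV: lode "\<lambda>(a::real^'n^'n) (b::real^'n). a *v b" A 0 T
    by (intro lode.intro bb_mv Ac T)
  obtain \<xi> where X: "LV.sol w xbar \<xi>" using LV.sol_exists[OF wi] by blast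
  show ?thesis
  proof (rule that)
    show "continuous_on {0..T} \<xi>" using X unfolding LV.sol_def by blast
    fix t assume t: "t \<in> {0..T}"
    show "term_sol T A w xbar t = \<xi> t"
      unfolding term_sol_def
    proof (rule the_equality)
      show "\<exists>\<zeta>. continuous_on {0..T} \<zeta> \<and> (\<forall>r\<in>{0..T}. ((\<lambda>s. A s *v \<zeta> s + w s) has_integral xbar - \<zeta> r) {r..T}) \<and> \<zeta> t = \<xi> t"
        using X unfolding LV.sol_def by blast
    next
      fix y assume "\<exists>\<zeta>. continuous_on {0..T} \<zeta> \<and> (\<forall>r\<in>{0..T}. ((\<lambda>s. A s *v \<zeta> s + w s) has_integral xbar - \<zeta> r) {r..T}) \<and> \<zeta> t = y"
      then obtain \<zeta> where Z: "LV.sol w xbar \<zeta>" "\<zeta> t = y" unfolding LV.sol_def by blast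
      show "y = \<xi> t" using LV.sol_unique[OF Z(1) X t] Z(2) by simp
    qed
  qed
qed


lemma conv_shift:
  fixes p p' :: "'i \<Rightarrow> 'a::real_normed_vector"
  assumes "z' \<in> convex hull (p' ` I)" and fin: "finite I"
  shows "\<exists>z \<in> convex hull (p ` I). norm (z - z') \<le> (\<Sum>i\<in>I. norm (p i - p' i))"
proof -
  let ?G = "(\<lambda>i. (p i, p' i)) ` I"
  let ?d = "\<Sum>i\<in>I. norm (p i - p' i)"
  have lf: "linear (fst :: 'a \<times> 'a \<Rightarrow> 'a)" "linear (snd :: 'a \<times> 'a \<Rightarrow> 'a)"
    by (auto intro: bounded_linear.linear bounded_linear_fst bounded_linear_snd)
  have "snd ` (convex hull ?G) = convex hull (snd ` ?G)" by (rule convex_hull_linear_image[OF lf(2)])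
  moreover have "snd ` ?G = p' ` I" by (simp add: image_image)
  ultimately have "z' \<in> snd ` (convex hull ?G)" using assms(1) by simp
  then obtain w where w: "w \<in> convex hull ?G" "snd w = z'" by blast
  have "fst ` (convex hull ?G) = convex hull (fst ` ?G)" by (rule convex_hull_linear_image[OF lf(1)])
  moreover have "fst ` ?G = p ` I" by (simp add: image_image)
  ultimately have "fst ` (convex hull ?G) = convex hull (p ` I)" by simp
  moreover have "fst w \<in> fst ` (convex hull ?G)" using w(1) by (rule imageI)
  ultimately have fw: "fst w \<in> convex hull (p ` I)" by simp
  have lin: "linear (\<lambda>w::'a \<times> 'a. fst w - snd w)"
    by (intro linear_compose_sub lf)
  have "convex ((\<lambda>w::'a \<times> 'a. fst w - snd w) -` cball 0 ?d)"
    by (rule convex_linear_vimage[OF lin convex_cball])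
  moreover have "?G \<subseteq> (\<lambda>w::'a \<times> 'a. fst w - snd w) -` cball 0 ?d"
  proof
    fix w assume "w \<in> ?G"
    then obtain i where i: "i \<in> I" "w = (p i, p' i)" by blast
    have "norm (p i - p' i) \<le> ?d" by (rule member_le_sum[OF i(1) _ fin]) simp
    then show "w \<in> (\<lambda>w::'a \<times> 'a. fst w - snd w) -` cball 0 ?d" using i by simp
  qed
  ultimately have "convex hull ?G \<subseteq> (\<lambda>w::'a \<times> 'a. fst w - snd w) -` cball 0 ?d"
    by (rule hull_minimal[rotated])
  then have "norm (fst w - snd w) \<le> ?d" using w(1) by auto
  then show ?thesis using fw w(2) by blast
qed

lemma infdist_conv_le:
  fixes p p' :: "'i \<Rightarrow> 'a::real_normed_vector"
  assumes "finite I" "I \<noteq> {}"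
  shows "infdist y (convex hull (p ` I)) \<le> infdist y (convex hull (p' ` I)) + (\<Sum>i\<in>I. norm (p i - p' i))"
proof -
  let ?d = "\<Sum>i\<in>I. norm (p i - p' i)"
  have ne: "convex hull (p' ` I) \<noteq> {}" using assms(2) by simp
  have "infdist y (convex hull (p ` I)) - ?d \<le> (INF a\<in>convex hull (p' ` I). dist y a)"
  proof (rule cINF_greatest[OF ne])
    fix z' assume z': "z' \<in> convex hull (p' ` I)"
    obtain z where z: "z \<in> convex hull (p ` I)" "norm (z - z') \<le> ?d"
      using conv_shift[OF z' assms(1)] by blast
    have "infdist y (convex hull (p ` I)) \<le> dist y z" by (rule infdist_le[OF z(1)])
    also have "\<dots> \<le> dist y z' + dist z z'" by (rule dist_triangle2)
    also have "\<dots> \<le> dist y z' + ?d" using z(2) by (simp add: dist_norm)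
    finally show "infdist y (convex hull (p ` I)) - ?d \<le> dist y z'" by simp
  qed
  then show ?thesis using infdist_notempty[OF ne] by simp
qed

lemma infdist_conv_abs:
  fixes p p' :: "'i \<Rightarrow> 'a::real_normed_vector"
  assumes "finite I" "I \<noteq> {}"
  shows "\<bar>infdist y (convex hull (p ` I)) - infdist y' (convex hull (p' ` I))\<bar>
     \<le> dist y y' + (\<Sum>i\<in>I. norm (p i - p' i))"
proof -
  have "(\<Sum>i\<in>I. norm (p' i - p i)) = (\<Sum>i\<in>I. norm (p i - p' i))"
    by (simp add: norm_minus_commute)
  then have "\<bar>infdist y (convex hull (p ` I)) - infdist y (convex hull (p' ` I))\<bar> \<le> (\<Sum>i\<in>I. norm (p i - p' i))"
    using infdist_conv_le[OF assms, of y p p'] infdist_conv_le[OF assms, of y p' p] by linarith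
  moreover have "\<bar>infdist y (convex hull (p' ` I)) - infdist y' (convex hull (p' ` I))\<bar> \<le> dist y y'"
    by (rule infdist_triangle_abs)
  ultimately show ?thesis by linarith
qed


lemma omega_integrable:
  fixes B :: "real \<Rightarrow> real^'m^'n" and E :: "real \<Rightarrow> real^'l^'n"
  assumes T: "T \<ge> 0" and Bc: "continuous_on {0..T} B" and Ec: "continuous_on {0..T} E"
    and U: "compact U" and D: "D \<noteq> {}"
    and w: "w \<in> admissible T (\<lambda>t. mink_diff (mat_image (B t) U) (mat_image (- E t) D))"
  shows "w integrable_on {0..T}"
proof -
  obtain d0 where d0: "d0 \<in> D" using D by blast
  have c1: "continuous_on ({0..T} \<times> U) (\<lambda>p. B (fst p) *v snd p)"
  proof (rule bounded_bilinear.continuous_on[OF bb_mv])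
    show "continuous_on ({0..T} \<times> U) (\<lambda>p. B (fst p))"
      by (rule continuous_on_compose2[OF Bc continuous_on_fst[OF continuous_on_id]]) auto
  qed (intro continuous_on_snd continuous_on_id)
  obtain M1 where M1: "M1 > 0" "\<And>p. p \<in> {0..T} \<times> U \<Longrightarrow> norm (B (fst p) *v snd p) \<le> M1"
    using compact_bound[OF compact_continuous_image[OF c1 compact_Times[OF compact_Icc U]]] by blast
  have c2: "continuous_on {0..T} (\<lambda>s. (- E s) *v d0)"
    by (rule bounded_bilinear.continuous_on[OF bb_mv]) (intro continuous_on_minus Ec continuous_on_const)+
  obtain M2 where M2: "M2 > 0" "\<And>s. s \<in> {0..T} \<Longrightarrow> norm ((- E s) *v d0) \<le> M2"
    using compact_bound[OF compact_continuous_image[OF c2 compact_Icc]] by blast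
  have wm: "w \<in> borel_measurable (lebesgue_on {0..T})" and ws: "\<And>s. s \<in> {0..T} \<Longrightarrow>
      w s \<in> mink_diff (mat_image (B s) U) (mat_image (- E s) D)"
    using w unfolding admissible_def by auto
  show ?thesis
  proof (rule measurable_bounded_by_integrable_imp_integrable[OF wm])
    show "(\<lambda>_. M1 + M2) integrable_on {0..T}" by (rule integrable_continuous_interval[OF continuous_on_const])
    show "{0..T} \<in> sets lebesgue" by simp
    fix s assume s: "s \<in> {0..T}"
    have "w s + (- E s) *v d0 \<in> (\<lambda>y. B s *v y) ` U"
      using ws[OF s] d0 unfolding mink_diff_def mat_image_def by blast
    then obtain u where u: "u \<in> U" "w s + (- E s) *v d0 = B s *v u" by blast
    have "w s = B s *v u - (- E s) *v d0" using u(2) by (simp add: algebra_simps)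
    then have "norm (w s) \<le> norm (B s *v u) + norm ((- E s) *v d0)"
      by (simp add: norm_triangle_ineq4)
    also have "\<dots> \<le> M1 + M2" using M1(2)[of "(s, u)"] M2(2)[OF s] s u(1) by fastforce
    finally show "norm (w s) \<le> M1 + M2" .
  qed
qed

theorem lemma6:
  fixes T :: real
    and A :: "real \<Rightarrow> real^'n^'n"
    and B :: "real \<Rightarrow> real^'m^'n"
    and E :: "real \<Rightarrow> real^'l^'n"
    and U :: "(real^'m) set" and D :: "(real^'l) set"
    and Lg \<gamma> :: real and nk :: nat
    and xbar :: "nat \<Rightarrow> real^'n"
    and \<omega> :: "nat \<Rightarrow> real \<Rightarrow> real^'n"
  assumes "T > 0"
    and "continuous_on {0..T} A" and "continuous_on {0..T} B" and "continuous_on {0..T} E"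
    and "compact U" and "convex U" and "U \<noteq> {}"
    and "compact D" and "convex D" and "D \<noteq> {}"
    and "\<forall>t\<in>{0..T}. mink_diff (mat_image (B t) U) (mat_image (- E t) D) \<noteq> {}"
    and "Lg \<ge> 0"
    and "\<forall>i\<in>{1..nk}. \<omega> i \<in> admissible T (\<lambda>t. mink_diff (mat_image (B t) U) (mat_image (- E t) D))"
  shows "continuous_on ({0..T} \<times> UNIV)
           (\<lambda>(t, x). Lg * Inf ((\<lambda>\<xi>. norm (state_trans T A T t *v (x - \<xi>)))
                         ` (convex hull {term_sol T A (\<omega> i) (xbar i) t | i. i \<in> {1..nk}})) + \<gamma>)"
proof -
  have T: "T \<ge> 0" using assms(1) by simp
  obtain W where Wc: "continuous_on {0..T} W" and Weq: "\<And>t. t \<in> {0..T} \<Longrightarrow> state_trans T A T t = W t"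
    using state_trans_sol[OF T assms(2)] by blast
  have "\<exists>\<xi>. continuous_on {0..T} \<xi> \<and> (\<forall>t\<in>{0..T}. term_sol T A (\<omega> i) (xbar i) t = \<xi> t)"
    if i: "i \<in> {1..nk}" for i
  proof -
    have "\<omega> i integrable_on {0..T}"
      using omega_integrable[OF T assms(3,4,5,10)] assms(13) i by blast
    then obtain \<xi> where "continuous_on {0..T} \<xi>" "\<And>t. t \<in> {0..T} \<Longrightarrow> term_sol T A (\<omega> i) (xbar i) t = \<xi> t"
      using term_sol_sol[OF T assms(2), where xbar="xbar i"] by blast
    then show ?thesis by blast
  qed
  then have "\<forall>i\<in>{1..nk}. \<exists>\<xi>. continuous_on {0..T} \<xi> \<and> (\<forall>t\<in>{0..T}. term_sol T A (\<omega> i) (xbar i) t = \<xi> t)"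
    by blast
  then obtain X where X: "\<forall>i\<in>{1..nk}. continuous_on {0..T} (X i) \<and> (\<forall>t\<in>{0..T}. term_sol T A (\<omega> i) (xbar i) t = X i t)"
    by (rule bchoice[elim_format]) blast
  have Xc: "\<And>i. i \<in> {1..nk} \<Longrightarrow> continuous_on {0..T} (X i)" using X by blast
  have Xeq: "\<And>i t. i \<in> {1..nk} \<Longrightarrow> t \<in> {0..T} \<Longrightarrow> term_sol T A (\<omega> i) (xbar i) t = X i t"
    using X by blast
  let ?S = "{0..T} \<times> (UNIV :: (real^'n) set)"
  let ?F = "\<lambda>(t, x). Lg * Inf ((\<lambda>\<xi>. norm (state_trans T A T t *v (x - \<xi>)))
                         ` (convex hull {term_sol T A (\<omega> i) (xbar i) t | i. i \<in> {1..nk}})) + \<gamma>"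
  show ?thesis
  proof (cases "nk = 0")
    case True
    then show ?thesis by simp
  next
    case False
    let ?I = "{1..nk}"
    have fin: "finite ?I" and ne: "?I \<noteq> {}" using False by auto
    define q where "q i t = W t *v X i t" for i t
    define H where "H z = infdist (W (fst z) *v snd z) (convex hull ((\<lambda>i. q i (fst z)) ` ?I))" for z
    have Feq: "?F z = Lg * H z + \<gamma>" if z: "z \<in> ?S" for z
    proof -
      obtain t x where tx: "z = (t, x)" by fastforce
      have t: "t \<in> {0..T}" using z tx by auto
      have s1: "{term_sol T A (\<omega> i) (xbar i) t | i. i \<in> ?I} = (\<lambda>i. X i t) ` ?I"
      proof (intro equalityI subsetI)
        fix v assume "v \<in> {term_sol T A (\<omega> i) (xbar i) t | i. i \<in> ?I}"
        then obtain i where i: "i \<in> ?I" "v = term_sol T A (\<omega> i) (xbar i) t" by blast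
        then show "v \<in> (\<lambda>i. X i t) ` ?I" using Xeq[OF i(1) t] by auto
      next
        fix v assume "v \<in> (\<lambda>i. X i t) ` ?I"
        then obtain i where i: "i \<in> ?I" "v = X i t" by blast
        then have "v = term_sol T A (\<omega> i) (xbar i) t" using Xeq[OF i(1) t] by simp
        then show "v \<in> {term_sol T A (\<omega> i) (xbar i) t | i. i \<in> ?I}" using i(1) by blast
      qed
      have "(\<lambda>\<xi>. norm (W t *v (x - \<xi>))) ` (convex hull ((\<lambda>i. X i t) ` ?I))
          = (\<lambda>\<eta>. dist (W t *v x) \<eta>) ` ((\<lambda>v. W t *v v) ` (convex hull ((\<lambda>i. X i t) ` ?I)))"
        by (simp add: image_image dist_norm matrix_vector_mult_diff_distrib)
      also have "(\<lambda>v. W t *v v) ` (convex hull ((\<lambda>i. X i t) ` ?I)) = convex hull ((\<lambda>i. q i t) ` ?I)"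
        by (subst convex_hull_linear_image[OF matrix_vector_mul_linear]) (simp add: image_image q_def)
      finally have "(\<lambda>\<xi>. norm (W t *v (x - \<xi>))) ` (convex hull ((\<lambda>i. X i t) ` ?I))
          = (\<lambda>\<eta>. dist (W t *v x) \<eta>) ` (convex hull ((\<lambda>i. q i t) ` ?I))" .
      moreover have "convex hull ((\<lambda>i. q i t) ` ?I) \<noteq> {}" using ne by simp
      ultimately have e3: "Inf ((\<lambda>\<xi>. norm (W t *v (x - \<xi>))) ` (convex hull ((\<lambda>i. X i t) ` ?I))) = H z"
        using tx by (simp add: H_def infdist_notempty)
      have "?F z = Lg * Inf ((\<lambda>\<xi>. norm (W t *v (x - \<xi>))) ` (convex hull ((\<lambda>i. X i t) ` ?I))) + \<gamma>"
        unfolding tx by (simp only: case_prod_conv Weq[OF t] s1)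
      then show ?thesis using e3 by simp
    qed
    have Wf: "continuous_on ?S (\<lambda>z. W (fst z))"
      by (rule continuous_on_compose2[OF Wc continuous_on_fst[OF continuous_on_id]]) auto
    have Xf: "continuous_on ?S (\<lambda>z. X i (fst z))" if i: "i \<in> ?I" for i
      by (rule continuous_on_compose2[OF Xc[OF i] continuous_on_fst[OF continuous_on_id]]) auto
    have qf: "continuous_on ?S (\<lambda>z. q i (fst z))" if i: "i \<in> ?I" for i
      unfolding q_def by (rule bounded_bilinear.continuous_on[OF bb_mv Wf Xf[OF i]])
    have yf: "continuous_on ?S (\<lambda>z. W (fst z) *v snd z)"
      by (rule bounded_bilinear.continuous_on[OF bb_mv Wf continuous_on_snd[OF continuous_on_id]])
    have Hc: "continuous_on ?S H"
      unfolding continuous_on_def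
    proof (intro ballI)
      fix z assume z: "z \<in> ?S"
      define R where "R z' = dist (W (fst z') *v snd z') (W (fst z) *v snd z)
          + (\<Sum>i\<in>?I. norm (q i (fst z') - q i (fst z)))" for z'
      have Rc: "continuous_on ?S R"
        unfolding R_def dist_norm
        by (intro continuous_on_add continuous_on_norm continuous_on_diff continuous_on_const
            continuous_on_sum yf qf) auto
      have "(R \<longlongrightarrow> R z) (at z within ?S)" using Rc z unfolding continuous_on_def by blast
      then have R0: "(R \<longlongrightarrow> 0) (at z within ?S)" by (simp add: R_def)
      have "((\<lambda>z'. H z' - H z) \<longlongrightarrow> 0) (at z within ?S)"
      proof (rule Lim_null_comparison[OF _ R0])
        have P: "\<bar>H z' - H z\<bar> \<le> R z'" if "z' \<in> ?S" for z'
          unfolding H_def R_def by (rule infdist_conv_abs[OF fin ne])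
        show "\<forall>\<^sub>F z' in at z within ?S. norm (H z' - H z) \<le> R z'"
          unfolding eventually_at_filter real_norm_def
        proof (rule always_eventually, intro allI impI)
          fix z' assume "z' \<in> ?S" then show "\<bar>H z' - H z\<bar> \<le> R z'" by (rule P)
        qed
      qed
      then show "(H \<longlongrightarrow> H z) (at z within ?S)" by (simp add: LIM_zero_iff)
    qed
    have "continuous_on ?S (\<lambda>z. Lg * H z + \<gamma>)"
      by (intro continuous_on_add continuous_on_mult continuous_on_const Hc)
    moreover have "continuous_on ?S ?F = continuous_on ?S (\<lambda>z. Lg * H z + \<gamma>)"
      by (rule continuous_on_cong[OF refl Feq])
    ultimately show ?thesis by (simp only:)
  qed
qed

end
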